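(* Let $B_i=(\underline{a}_i,\overline{a}_i)\times(\underline{b}_i,\overline{b}_i)\subset\mathbb{R}^2$, $i=1,\dots,N$, be rectangles, $d$ a positive integer, $p=\binom{d+2}{2}$. Let $$V(B_1,\dots,B_N)=\{f\in\mathbb{Z}[x,y]\mid \{(x,y):f(x,y)=0\}\cap B_i\neq\emptyset \text{ for all } i\}.$$ Let $\Delta_d:\mathbb{R}^{2p}\to\mathbb{R}$ be $\Delta_d(x_1,y_1,\dots,x_p,y_p)=\det M_d(x_1,y_1,\dots,x_p,y_p)$, where $M_d$ is the $p\times p$ matrix whose $i$-th column is $\mathbf{v}_d(x_i,y_i)$ and $\mathbf{v}_d$ is the vector of all $p$ monomials in $x,y$ of total degree at most $d$. If for at least one choice of indices $1\le j_1<j_2<\cdots<j_p\le N$ the function $\Delta_d$ is strictly positive at every point of $B_{j_1}\times\cdots\times B_{j_p}\subset\mathbb{R}^{2p}$, or strictly negative at every point of it, then $$\min\{\deg f\mid f\in V(B_1,\dots,B_N),\ f\neq0\}\ge d+1.$$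
   Context: $\mathbf{v}_d=[1,x,y,x^2,xy,y^2,\dots,x^d,\dots,y^d]^T$ and $\mathbf{v}_d(x_i,y_i)$ is its evaluation at $(x_i,y_i)$. *)

theory Defs
  imports "HOL-Computational_Algebra.Polynomial" "Jordan_Normal_Form.Determinant"
begin

text \<open>Bivariate integer polynomials Z[x,y] are represented as int poly poly,
  i.e. (Z[x])[y]: the outer variable is y, the coefficients are polynomials in x.\<close>

definition eval2 :: "int poly poly \<Rightarrow> real \<Rightarrow> real \<Rightarrow> real" where
  "eval2 f x y = poly (map_poly (\<lambda>q. poly (map_poly of_int q) x) f) y"

definition total_degree :: "int poly poly \<Rightarrow> nat" where
  "total_degree f = Max {i + degree (coeff f i) | i. coeff f i \<noteq> 0}"

text \<open>Exponent pairs (a,b) of the monomials x^a y^b of total degree at most d,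
  in the order 1, x, y, x^2, xy, y^2, ..., x^d, ..., y^d.\<close>
definition monomial_exps :: "nat \<Rightarrow> (nat \<times> nat) list" where
  "monomial_exps d = concat (map (\<lambda>k. map (\<lambda>j. (k - j, j)) [0..<Suc k]) [0..<Suc d])"

text \<open>Delta_d: determinant of the p x p matrix whose c-th column is v_d evaluated
  at the point pt c (points indexed 0..p-1), p = (d+2 choose 2).\<close>
definition Delta :: "nat \<Rightarrow> (nat \<Rightarrow> real \<times> real) \<Rightarrow> real" where
  "Delta d pt = det (mat ((d+2) choose 2) ((d+2) choose 2)
      (\<lambda>(r, c). fst (pt c) ^ fst (monomial_exps d ! r) * snd (pt c) ^ snd (monomial_exps d ! r)))"

definition in_box :: "(nat \<Rightarrow> real) \<Rightarrow> (nat \<Rightarrow> real) \<Rightarrow> (nat \<Rightarrow> real) \<Rightarrow> (nat \<Rightarrow> real)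
    \<Rightarrow> nat \<Rightarrow> real \<times> real \<Rightarrow> bool" where
  "in_box al ah bl bh i pt \<longleftrightarrow>
     al i < fst pt \<and> fst pt < ah i \<and> bl i < snd pt \<and> snd pt < bh i"

definition V :: "(nat \<Rightarrow> real) \<Rightarrow> (nat \<Rightarrow> real) \<Rightarrow> (nat \<Rightarrow> real) \<Rightarrow> (nat \<Rightarrow> real)
    \<Rightarrow> nat \<Rightarrow> int poly poly set" where
  "V al ah bl bh N = {f. \<forall>i\<in>{1..N}. \<exists>x y. in_box al ah bl bh i (x, y) \<and> eval2 f x y = 0}"

end

theory Submission
  imports Defs
begin

lemma me_length: "length (monomial_exps d) = (d+2) choose 2"
proof (induction d)
  case 0 then show ?case by (simp add: monomial_exps_def numeral_2_eq_2)
next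
  case (Suc d)
  have "monomial_exps (Suc d) = monomial_exps d @ map (\<lambda>j. (Suc d - j, j)) [0..<Suc (Suc d)]"
    by (simp add: monomial_exps_def)
  then have "length (monomial_exps (Suc d)) = ((d+2) choose 2) + (d+2)" using Suc by simp
  also have "\<dots> = (Suc d + 2) choose 2"
    by (simp add: numeral_2_eq_2 add.commute)
  finally show ?case .
qed


lemma me_set: "set (monomial_exps d) = {(a,b). a+b \<le> d}"
proof
  show "set (monomial_exps d) \<subseteq> {(a,b). a+b \<le> d}"
    unfolding monomial_exps_def by auto
  show "{(a,b). a+b \<le> d} \<subseteq> set (monomial_exps d)"
  proof clarify
    fix a b :: nat assume ab: "a + b \<le> d"
    have "(a,b) \<in> set (map (\<lambda>j. (a + b - j, j)) [0..<Suc (a+b)])"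
      unfolding set_map by (rule image_eqI[of _ _ b]) auto
    moreover have "map (\<lambda>j. (a + b - j, j)) [0..<Suc (a+b)] \<in> set (map (\<lambda>k. map (\<lambda>j. (k - j, j)) [0..<Suc k]) [0..<Suc d])"
      using ab unfolding set_map by (intro imageI) auto
    ultimately show "(a,b) \<in> set (monomial_exps d)"
      unfolding monomial_exps_def set_concat by blast
  qed
qed


lemma me_distinct: "distinct (monomial_exps d)"
  unfolding monomial_exps_def
proof (rule distinct_concat)
  show "distinct (map (\<lambda>k. map (\<lambda>j. (k-j,j)) [0..<Suc k]) [0..<Suc d])"
    by (auto simp: distinct_map inj_on_def dest: map_eq_imp_length_eq)
  show "\<And>ys. ys \<in> set (map (\<lambda>k. map (\<lambda>j. (k-j,j)) [0..<Suc k]) [0..<Suc d]) \<Longrightarrow> distinct ys"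
    by (auto simp: distinct_map inj_on_def)
  show "\<And>ys zs. ys \<in> set (map (\<lambda>k. map (\<lambda>j. (k-j,j)) [0..<Suc k]) [0..<Suc d]) \<Longrightarrow>
      zs \<in> set (map (\<lambda>k. map (\<lambda>j. (k-j,j)) [0..<Suc k]) [0..<Suc d]) \<Longrightarrow> ys \<noteq> zs \<Longrightarrow> set ys \<inter> set zs = {}"
  proof -
    fix ys zs assume "ys \<in> set (map (\<lambda>k. map (\<lambda>j. (k-j,j)) [0..<Suc k]) [0..<Suc d])"
      "zs \<in> set (map (\<lambda>k. map (\<lambda>j. (k-j,j)) [0..<Suc k]) [0..<Suc d])" and ne: "ys \<noteq> zs"
    then obtain k k' where ys: "ys = map (\<lambda>j. (k-j,j)) [0..<Suc k]" and zs: "zs = map (\<lambda>j. (k'-j,j)) [0..<Suc k']"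
      by auto
    have s1: "\<And>p. p \<in> set ys \<Longrightarrow> fst p + snd p = k" unfolding ys by auto
    have s2: "\<And>p. p \<in> set zs \<Longrightarrow> fst p + snd p = k'" unfolding zs by auto
    have "k \<noteq> k'" using ne ys zs by auto
    then show "set ys \<inter> set zs = {}" using s1 s2 by fastforce
  qed
qed


lemma eval2_expand:
  assumes deg: "\<And>i. coeff f i \<noteq> 0 \<Longrightarrow> i + degree (coeff f i) \<le> d"
  shows "eval2 f x y = (\<Sum>(a,b)\<in>{(a,b). a+b\<le>d}. of_int (coeff (coeff f b) a) * x^a * y^b)"
proof -
  have cz: "coeff (coeff f b) a = 0" if "a + b > d" for a b
  proof (rule ccontr)
    assume h: "coeff (coeff f b) a \<noteq> 0"
    then have "coeff f b \<noteq> 0" by auto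
    from deg[OF this] have "b + degree (coeff f b) \<le> d" .
    moreover from h have "a \<le> degree (coeff f b)" using le_degree by blast
    ultimately show False using that by simp
  qed
  have inner: "poly (map_poly of_int q) x = (\<Sum>a\<le>d. of_int (coeff q a) * x^a)"
    if "degree q \<le> d" for q :: "int poly"
  proof -
    have dq: "degree (map_poly (of_int::int\<Rightarrow>real) q) \<le> d"
      using that map_poly_degree_leq[of "of_int::int\<Rightarrow>real" q] by linarith
    have "poly (map_poly of_int q) x = (\<Sum>a\<le>degree (map_poly (of_int::int\<Rightarrow>real) q). coeff (map_poly of_int q) a * x^a)"
      by (rule poly_altdef)
    also have "\<dots> = (\<Sum>a\<le>d. coeff (map_poly (of_int::int\<Rightarrow>real) q) a * x^a)"
    proof (rule sum.mono_neutral_left)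
      show "\<forall>i\<in>{..d} - {..degree (map_poly (of_int::int\<Rightarrow>real) q)}. coeff (map_poly (of_int::int\<Rightarrow>real) q) i * x ^ i = 0"
        by (auto simp: coeff_eq_0)
    qed (use dq in auto)
    finally show ?thesis by (simp add: coeff_map_poly)
  qed
  define F where "F = map_poly (\<lambda>q. poly (map_poly (of_int::int\<Rightarrow>real) q) x) f"
  have degf: "degree f \<le> d"
  proof (cases "f = 0")
    case False
    then have "coeff f (degree f) \<noteq> 0" by simp
    from deg[OF this] show ?thesis by simp
  qed simp
  have dF: "degree F \<le> d" unfolding F_def using degf map_poly_degree_leq[of _ f] order.trans by blast
  have "eval2 f x y = (\<Sum>b\<le>degree F. coeff F b * y^b)"
    unfolding eval2_def F_def by (rule poly_altdef)
  also have "\<dots> = (\<Sum>b\<le>d. coeff F b * y^b)"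
  proof (rule sum.mono_neutral_left)
    show "\<forall>i\<in>{..d} - {..degree F}. coeff F i * y ^ i = 0" by (auto simp: coeff_eq_0)
  qed (use dF in auto)
  also have "\<dots> = (\<Sum>b\<le>d. poly (map_poly (of_int::int\<Rightarrow>real) (coeff f b)) x * y^b)"
    unfolding F_def by (simp add: coeff_map_poly)
  also have "\<dots> = (\<Sum>b\<le>d. \<Sum>a\<le>d. of_int (coeff (coeff f b) a) * x^a * y^b)"
  proof (rule sum.cong[OF refl])
    fix b assume "b \<in> {..d}"
    show "poly (map_poly of_int (coeff f b)) x * y ^ b = (\<Sum>a\<le>d. of_int (coeff (coeff f b) a) * x ^ a * y ^ b)"
    proof (cases "coeff f b = 0")
      case False
      from deg[OF this] have "degree (coeff f b) \<le> d" by simp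
      then show ?thesis by (simp add: inner sum_distrib_right)
    qed simp
  qed
  also have "\<dots> = (\<Sum>a\<le>d. \<Sum>b\<le>d. of_int (coeff (coeff f b) a) * x^a * y^b)"
    by (rule sum.swap)
  also have "\<dots> = (\<Sum>(a,b)\<in>{..d}\<times>{..d}. of_int (coeff (coeff f b) a) * x^a * y^b)"
    by (rule sum.cartesian_product)
  also have "\<dots> = (\<Sum>(a,b)\<in>{(a,b). a+b\<le>d}. of_int (coeff (coeff f b) a) * x^a * y^b)"
  proof (rule sum.mono_neutral_right)
    show "{(a,b). a+b\<le>d} \<subseteq> {..d}\<times>{..d}" by auto
    show "\<forall>i\<in>{..d} \<times> {..d} - {(a, b). a + b \<le> d}.
       (case i of (a, b) \<Rightarrow> real_of_int (coeff (coeff f b) a) * x ^ a * y ^ b) = 0"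
      using cz by (auto simp: not_le) (meson not_le)
  qed simp
  finally show ?thesis .
qed

theorem corollary4:
  fixes al ah bl bh :: "nat \<Rightarrow> real" and N d :: nat
  assumes "d > 0"
    and "\<exists>j :: nat \<Rightarrow> nat. strict_mono_on {..<((d+2) choose 2)} j
           \<and> (\<forall>i < (d+2) choose 2. 1 \<le> j i \<and> j i \<le> N)
           \<and> ((\<forall>pt. (\<forall>i < (d+2) choose 2. in_box al ah bl bh (j i) (pt i)) \<longrightarrow> Delta d pt > 0)
              \<or> (\<forall>pt. (\<forall>i < (d+2) choose 2. in_box al ah bl bh (j i) (pt i)) \<longrightarrow> Delta d pt < 0))"
  shows "\<forall>f \<in> V al ah bl bh N. f \<noteq> 0 \<longrightarrow> total_degree f \<ge> d + 1"
proof (intro ballI impI)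
  fix f assume fV: "f \<in> V al ah bl bh N" and f0: "f \<noteq> 0"
  define p where "p = (d+2) choose 2"
  define ms where "ms = monomial_exps d"
  have lms: "length ms = p" unfolding ms_def p_def by (rule me_length)
  show "total_degree f \<ge> d+1"
  proof (rule ccontr)
    assume "\<not> ?thesis"
    then have td: "total_degree f \<le> d" by simp
    let ?S = "{i + degree (coeff f i) | i. coeff f i \<noteq> 0}"
    have fin: "finite ?S"
    proof -
      have "?S \<subseteq> (\<lambda>i. i + degree (coeff f i)) ` {..degree f}" using le_degree by blast
      then show ?thesis by (rule finite_subset) simp
    qed
    have deg: "i + degree (coeff f i) \<le> d" if "coeff f i \<noteq> 0" for i
    proof -
      have "i + degree (coeff f i) \<le> Max ?S" using fin that by (intro Max_ge) auto
      then show ?thesis using td unfolding total_degree_def by simp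
    qed
    obtain j where jm: "\<forall>i < p. 1 \<le> j i \<and> j i \<le> N"
      and sgn: "(\<forall>pt. (\<forall>i < p. in_box al ah bl bh (j i) (pt i)) \<longrightarrow> Delta d pt > 0)
              \<or> (\<forall>pt. (\<forall>i < p. in_box al ah bl bh (j i) (pt i)) \<longrightarrow> Delta d pt < 0)"
      using assms(2) unfolding p_def by blast
    define pt where "pt i = (SOME q. in_box al ah bl bh (j i) q \<and> eval2 f (fst q) (snd q) = 0)" for i
    have ptp: "in_box al ah bl bh (j i) (pt i) \<and> eval2 f (fst (pt i)) (snd (pt i)) = 0" if "i < p" for i
    proof -
      from fV jm that obtain x y where "in_box al ah bl bh (j i) (x,y)" "eval2 f x y = 0"
        unfolding V_def by fastforce
      then have "\<exists>q. in_box al ah bl bh (j i) q \<and> eval2 f (fst q) (snd q) = 0" by auto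
      then show ?thesis unfolding pt_def by (rule someI_ex)
    qed
    have Dnz: "Delta d pt \<noteq> 0" using sgn ptp by fastforce
    define cv where "cv = vec p (\<lambda>r. real_of_int (coeff (coeff f (snd (ms!r))) (fst (ms!r))))"
    define M where "M = mat p p (\<lambda>(r, c). fst (pt c) ^ fst (ms ! r) * snd (pt c) ^ snd (ms ! r))"
    have DM: "Delta d pt = det M" unfolding Delta_def M_def p_def ms_def by simp
    have expand: "eval2 f x y = (\<Sum>r<p. cv$r * x^fst(ms!r) * y^snd(ms!r))" for x y
    proof -
      let ?g = "\<lambda>(a,b). real_of_int (coeff (coeff f b) a) * x^a * y^b"
      have "eval2 f x y = sum ?g {(a,b). a+b\<le>d}" by (rule eval2_expand[OF deg])
      also have "\<dots> = sum ?g (set ms)" unfolding ms_def me_set ..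
      also have "\<dots> = sum_list (map ?g ms)"
        by (rule sum_list_distinct_conv_sum_set[symmetric]) (simp add: ms_def me_distinct)
      also have "\<dots> = (\<Sum>r=0..<length ms. ?g (ms!r))" by (simp add: sum_list_sum_nth)
      also have "\<dots> = (\<Sum>r<p. cv$r * x^fst(ms!r) * y^snd(ms!r))"
        using lms by (intro sum.cong) (auto simp: cv_def split: prod.splits)
      finally show ?thesis .
    qed
    have Mc: "M \<in> carrier_mat p p" unfolding M_def by simp
    have kern: "transpose_mat M *\<^sub>v cv = 0\<^sub>v p"
    proof (rule eq_vecI)
      fix c assume "c < dim_vec (0\<^sub>v p :: real vec)"
      then have c: "c < p" by simp
      have "(transpose_mat M *\<^sub>v cv) $ c = (\<Sum>r=0..<p. M $$ (r,c) * cv $ r)"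
        using c Mc by (simp add: scalar_prod_def cv_def)
      also have "\<dots> = (\<Sum>r<p. cv$r * fst (pt c)^fst(ms!r) * snd (pt c)^snd(ms!r))"
        using c by (intro sum.cong) (auto simp: M_def)
      also have "\<dots> = eval2 f (fst (pt c)) (snd (pt c))" by (rule expand[symmetric])
      also have "\<dots> = 0" using ptp c by blast
      finally show "(transpose_mat M *\<^sub>v cv) $ c = 0\<^sub>v p $ c" using c by simp
    qed (simp add: M_def)
    have cvnz: "cv \<noteq> 0\<^sub>v p"
    proof -
      obtain b where b: "coeff f b \<noteq> 0" using f0 by (metis leading_coeff_0_iff)
      define a where "a = degree (coeff f b)"
      have a: "coeff (coeff f b) a \<noteq> 0" unfolding a_def using b by simp
      have "(a,b) \<in> set ms" using deg[OF b] unfolding ms_def me_set a_def by simp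
      then obtain r where r: "r < length ms" "ms ! r = (a,b)" by (metis in_set_conv_nth)
      then have "cv $ r \<noteq> 0" using a lms by (simp add: cv_def)
      then show ?thesis using r lms by auto
    qed
    have cvc: "cv \<in> carrier_vec p" unfolding cv_def by simp
    have tc: "transpose_mat M \<in> carrier_mat p p" using Mc by simp
    have "det (transpose_mat M) = 0"
      using det_0_iff_vec_prod_zero[OF tc] cvc kern cvnz by blast
    then have "det M = 0" using det_transpose[OF Mc] by simp
    then show False using Dnz DM by simp
  qed
qed

end
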